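(* Let $Q$ be a smooth $m$-dimensional manifold with local coordinates $(q^\lambda)$, let $Q_R=\mathbb R\times Q\to\mathbb R$ with coordinate $\tau$ on $\mathbb R$, and let $(\tau,q^\lambda,q^\lambda_\tau)$, $(\tau,q^\lambda,q^\lambda_\tau,q^\lambda_{\tau\tau})$ be the induced coordinates on the first and second order jet manifolds of sections of $Q_R\to\mathbb R$. Let $N\ge1$ be an integer, let $G_{\alpha_1\ldots\alpha_{2N}}(q^\nu)$ be the components of a symmetric tensor field on $Q$ such that $G=G_{\alpha_1\ldots\alpha_{2N}}\dot q^{\alpha_1}\cdots\dot q^{\alpha_{2N}}>0$ on $TQ$ minus its zero section, and let $A=A_\mu(q^\nu)dq^\mu$ be a one-form on $Q$ with $F_{\lambda\mu}=\partial_\lambda A_\mu-\partial_\mu A_\lambda$. Consider the Lagrangian $L=(G^{1/2N}+q^\mu_\tau A_\mu)d\tau$, $G=G_{\alpha_1\ldots\alpha_{2N}}q^{\alpha_1}_\tau\cdots q^{\alpha_{2N}}_\tau$, on the complement in $J^1Q_R$ of $\mathbb R\times(\text{zero section})$, with Euler--Lagrange expressions $\mathcal E_\lambda=\partial_\lambda\mathcal L-d_\tau\partial^\tau_\lambda\mathcal L$, and define $$E_\beta=\Big(\tfrac{1}{2N}\partial_\beta G_{\mu\alpha_2\ldots\alpha_{2N}}-\partial_\mu G_{\beta\alpha_2\ldots\alpha_{2N}}\Big)q^\mu_\tau q^{\alpha_2}_\tau\cdots q^{\alpha_{2N}}_\tau-(2N-1)G_{\beta\mu\alpha_3\ldots\alpha_{2N}}q^\mu_{\tau\tau}q^{\alpha_3}_\tau\cdots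 q^{\alpha_{2N}}_\tau+G^{1-1/2N}F_{\beta\mu}q^\mu_\tau .$$ Let $W_G$ be the submanifold of $J^1Q_R$ given by $G=1$. Then any solution of the Lagrange equations $\mathcal E_\lambda=0$ whose first jet prolongation lies in $W_G$ is a solution of the equations $E_\beta=0$.
   Context: A solution means a section $\tau\mapsto(\tau,s^\lambda(\tau))$ of $Q_R\to\mathbb R$ (with nowhere vanishing velocity) whose jet prolongations satisfy the stated equations; $d_\tau=\partial_\tau+q^\lambda_\tau\partial_\lambda+q^\lambda_{\tau\tau}\partial^\tau_\lambda+\cdots$ is the total derivative and $\partial^\tau_\lambda=\partial/\partial q^\lambda_\tau$. One has $\mathcal E_\lambda=E_\beta[\delta^\beta_\lambda-q^\beta_\tau G_{\lambda\nu_2\ldots\nu_{2N}}q^{\nu_2}_\tau\cdots q^{\nu_{2N}}_\tau G^{-1}]G^{1/2N-1}$. *)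

theory Defs
  imports "HOL-Analysis.Analysis" "HOL-Library.Multiset"
begin

text \<open>Everything is expressed in one coordinate chart: the chart domain of Q is an
open set U of real^'m (coordinates q^lambda), jet coordinates are
(tau, q, v = q_tau, a = q_tau_tau).\<close>

definition pd :: "'m::finite \<Rightarrow> (real^'m \<Rightarrow> real) \<Rightarrow> real^'m \<Rightarrow> real" where
  "pd \<beta> f q = deriv (\<lambda>t. f (q + t *\<^sub>R axis \<beta> 1)) 0"

definition iterpd :: "'m::finite list \<Rightarrow> (real^'m \<Rightarrow> real) \<Rightarrow> real^'m \<Rightarrow> real" where
  "iterpd \<beta>s f = fold pd \<beta>s f"

definition smooth_on :: "(real^'m::finite) set \<Rightarrow> (real^'m \<Rightarrow> real) \<Rightarrow> bool" where
  "smooth_on U f \<longleftrightarrow> (\<forall>\<beta>s. continuous_on U (iterpd \<beta>s f) \<and>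
     (\<forall>\<beta>. \<forall>q\<in>U. ((\<lambda>t. iterpd \<beta>s f (q + t *\<^sub>R axis \<beta> 1))
         has_real_derivative iterpd (\<beta>s @ [\<beta>]) f q) (at 0)))"

definition smooth_curve :: "real set \<Rightarrow> (real \<Rightarrow> real^'m::finite) \<Rightarrow> bool" where
  "smooth_curve T s \<longleftrightarrow> (\<forall>i k. \<forall>\<tau>\<in>T.
     (((deriv ^^ k) (\<lambda>t. s t $ i)) has_real_derivative
        (deriv ^^ Suc k) (\<lambda>t. s t $ i) \<tau>) (at \<tau>))"

definition vel :: "(real \<Rightarrow> real^'m::finite) \<Rightarrow> real \<Rightarrow> real^'m" where
  "vel s \<tau> = (\<chi> i. deriv (\<lambda>t. s t $ i) \<tau>)"

definition acc :: "(real \<Rightarrow> real^'m::finite) \<Rightarrow> real \<Rightarrow> real^'m" where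
  "acc s \<tau> = (\<chi> i. (deriv ^^ 2) (\<lambda>t. s t $ i) \<tau>)"

definition vmon :: "real^'m::finite \<Rightarrow> 'm list \<Rightarrow> real" where
  "vmon v \<alpha>s = prod_list (map (\<lambda>a. v $ a) \<alpha>s)"

definition idx :: "nat \<Rightarrow> 'm::finite list set" where
  "idx k = {\<alpha>s. length \<alpha>s = k}"

definition Gform :: "('m::finite list \<Rightarrow> real^'m \<Rightarrow> real) \<Rightarrow> nat \<Rightarrow> real^'m \<Rightarrow> real^'m \<Rightarrow> real" where
  "Gform G N q v = (\<Sum>\<alpha>s\<in>idx (2*N). G \<alpha>s q * vmon v \<alpha>s)"

definition symmetric_tensor :: "nat \<Rightarrow> ('m::finite list \<Rightarrow> real^'m \<Rightarrow> real) \<Rightarrow> bool" where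
  "symmetric_tensor k G \<longleftrightarrow> (\<forall>\<alpha>s \<gamma>s. length \<alpha>s = k \<longrightarrow> mset \<alpha>s = mset \<gamma>s \<longrightarrow> G \<alpha>s = G \<gamma>s)"

definition Lag :: "('m::finite list \<Rightarrow> real^'m \<Rightarrow> real) \<Rightarrow> ('m \<Rightarrow> real^'m \<Rightarrow> real) \<Rightarrow> nat
     \<Rightarrow> real^'m \<Rightarrow> real^'m \<Rightarrow> real" where
  "Lag G A N q v = Gform G N q v powr (1 / real (2*N)) + (\<Sum>\<mu>\<in>UNIV. v $ \<mu> * A \<mu> q)"

definition EL :: "('m::finite list \<Rightarrow> real^'m \<Rightarrow> real) \<Rightarrow> ('m \<Rightarrow> real^'m \<Rightarrow> real) \<Rightarrow> nat
     \<Rightarrow> (real \<Rightarrow> real^'m) \<Rightarrow> 'm \<Rightarrow> real \<Rightarrow> real" where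
  "EL G A N s l \<tau> =
     pd l (\<lambda>q. Lag G A N q (vel s \<tau>)) (s \<tau>)
     - deriv (\<lambda>t. pd l (\<lambda>v. Lag G A N (s t) v) (vel s t)) \<tau>"

definition Fld :: "('m::finite \<Rightarrow> real^'m \<Rightarrow> real) \<Rightarrow> 'm \<Rightarrow> 'm \<Rightarrow> real^'m \<Rightarrow> real" where
  "Fld A l \<mu> q = pd l (A \<mu>) q - pd \<mu> (A l) q"

definition Eexpr :: "('m::finite list \<Rightarrow> real^'m \<Rightarrow> real) \<Rightarrow> ('m \<Rightarrow> real^'m \<Rightarrow> real) \<Rightarrow> nat
     \<Rightarrow> 'm \<Rightarrow> real^'m \<Rightarrow> real^'m \<Rightarrow> real^'m \<Rightarrow> real" where
  "Eexpr G A N \<beta> q v a =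
     (\<Sum>\<mu>\<in>UNIV. \<Sum>\<alpha>s\<in>idx (2*N - 1).
        (1 / real (2*N) * pd \<beta> (G (\<mu> # \<alpha>s)) q - pd \<mu> (G (\<beta> # \<alpha>s)) q) * v $ \<mu> * vmon v \<alpha>s)
   - real (2*N - 1) * (\<Sum>\<mu>\<in>UNIV. \<Sum>\<alpha>s\<in>idx (2*N - 2). G (\<beta> # \<mu> # \<alpha>s) q * a $ \<mu> * vmon v \<alpha>s)
   + Gform G N q v powr (1 - 1 / real (2*N)) * (\<Sum>\<mu>\<in>UNIV. Fld A \<beta> \<mu> q * v $ \<mu>)"

end

theory Submission
  imports Defs
begin


lemma line_bound:
  fixes f :: "real^'m::finite \<Rightarrow> real"
  assumes D: "\<And>t. \<bar>t\<bar> \<le> \<bar>r\<bar> \<Longrightarrow> ((\<lambda>u. f (p + t *\<^sub>R axis b 1 + u *\<^sub>R axis b 1)) has_real_derivative D t) (at 0)"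
  and B: "\<And>t. \<bar>t\<bar> \<le> \<bar>r\<bar> \<Longrightarrow> \<bar>D t - c\<bar> \<le> e"
  shows "\<bar>f (p + r *\<^sub>R axis b 1) - f p - r * c\<bar> \<le> e * \<bar>r\<bar>"
proof -
  define g where "g s = f (p + s *\<^sub>R axis b 1) - s * c" for s
  have dg: "(g has_real_derivative D t - c) (at t)" if "\<bar>t\<bar> \<le> \<bar>r\<bar>" for t
  proof -
    have "((\<lambda>u. f (p + (u + t) *\<^sub>R axis b 1)) has_real_derivative D t) (at 0)"
      using D[OF that] by (simp add: scaleR_add_left algebra_simps)
    then have "((\<lambda>s. f (p + s *\<^sub>R axis b 1)) has_real_derivative D t) (at t)"
      using DERIV_shift[of "\<lambda>s. f (p + s *\<^sub>R axis b 1)" "D t" 0 t] by simp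
    then show ?thesis unfolding g_def
      by (auto intro!: derivative_eq_intros)
  qed
  have g0: "g 0 = f p" by (simp add: g_def)
  have gr: "g r = f (p + r *\<^sub>R axis b 1) - r * c" by (simp add: g_def)
  consider "r > 0" | "r < 0" | "r = 0" by linarith
  then show ?thesis
  proof cases
    case 1
    obtain z where z: "0 < z" "z < r" "g r - g 0 = (r - 0) * (D z - c)"
      using MVT2[OF 1, of g "\<lambda>t. D t - c"] dg by force
    have "\<bar>D z - c\<bar> \<le> e" using B[of z] z by simp
    moreover have "\<bar>f (p + r *\<^sub>R axis b 1) - f p - r * c\<bar> = \<bar>r\<bar> * \<bar>D z - c\<bar>"
    proof -
      have "f (p + r *\<^sub>R axis b 1) - f p - r * c = r * (D z - c)" using z g0 gr by simp
      then show ?thesis by (simp add: abs_mult)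
    qed
    ultimately show ?thesis using 1 by (simp add: mult.commute mult_left_mono)
  next
    case 2
    obtain z where z: "r < z" "z < 0" "g 0 - g r = (0 - r) * (D z - c)"
      using MVT2[OF 2, of g "\<lambda>t. D t - c"] dg by force
    have "\<bar>D z - c\<bar> \<le> e" using B[of z] z by simp
    moreover have "\<bar>f (p + r *\<^sub>R axis b 1) - f p - r * c\<bar> = \<bar>r\<bar> * \<bar>D z - c\<bar>"
    proof -
      have "f (p + r *\<^sub>R axis b 1) - f p - r * c = r * (D z - c)" using z g0 gr by (simp add: algebra_simps)
      then show ?thesis by (simp add: abs_mult)
    qed
    ultimately show ?thesis using 2 by (simp add: mult.commute mult_left_mono)
  next
    case 3 then show ?thesis by simp
  qed
qed

lemma partials_has_derivative:
  fixes f :: "real^'m::finite \<Rightarrow> real"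
  assumes U: "open U" "q \<in> U"
  and D: "\<And>\<beta> x. x \<in> U \<Longrightarrow> ((\<lambda>t. f (x + t *\<^sub>R axis \<beta> 1)) has_real_derivative D \<beta> x) (at 0)"
  and C: "\<And>\<beta>. continuous_on U (D \<beta>)"
  shows "(f has_derivative (\<lambda>h. \<Sum>\<beta>\<in>UNIV. h $ \<beta> * D \<beta> q)) (at q)"
  unfolding has_derivative_at_alt
proof (intro conjI allI impI)
  show "bounded_linear (\<lambda>h. \<Sum>\<beta>\<in>UNIV. h $ \<beta> * D \<beta> q)"
    by (intro bounded_linear_sum bounded_linear_compose[OF bounded_linear_mult_left bounded_linear_vec_nth])
  fix e :: real assume e: "e > 0"
  define K where "K = real (card (UNIV :: 'm set))"
  have K: "K > 0" unfolding K_def by simp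
  define e' where "e' = e / K"
  have e': "e' > 0" using e K by (simp add: e'_def)
  obtain d0 where d0: "d0 > 0" "ball q d0 \<subseteq> U" using U open_contains_ball by blast
  have "\<forall>\<beta>. \<exists>d>0. \<forall>x\<in>U. dist x q < d \<longrightarrow> dist (D \<beta> x) (D \<beta> q) < e'"
    using C U(2) e' unfolding continuous_on_iff by blast
  then obtain dd where dd: "\<And>\<beta>. dd \<beta> > 0" "\<And>\<beta> x. x \<in> U \<Longrightarrow> dist x q < dd \<beta> \<Longrightarrow> dist (D \<beta> x) (D \<beta> q) < e'"
    by metis
  define d where "d = Min (insert d0 (range dd))"
  have d: "d > 0" unfolding d_def using d0 dd by (auto simp: Min_gr_iff)
  have dle0: "d \<le> d0" unfolding d_def by auto
  have dle: "d \<le> dd \<beta>" for \<beta> unfolding d_def by (rule Min_le) auto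
  have inU: "q + w \<in> U" if "norm w < d" for w
    using that dle0 d0(2) by (auto simp: dist_norm)
  have Dclose: "\<bar>D \<beta> (q + w) - D \<beta> q\<bar> \<le> e'" if "norm w < d" for w \<beta>
    using dd(2)[OF inU[OF that], of \<beta>] that dle[of \<beta>] by (simp add: dist_norm)
  have main: "\<forall>h. (\<forall>\<beta>. \<beta> \<notin> F \<longrightarrow> h $ \<beta> = 0) \<longrightarrow> norm h < d \<longrightarrow>
      \<bar>f (q + h) - f q - (\<Sum>\<beta>\<in>F. h $ \<beta> * D \<beta> q)\<bar> \<le> e' * (\<Sum>\<beta>\<in>F. \<bar>h $ \<beta>\<bar>)" for F
  proof (induction F rule: finite_induct[OF finite])
    case 1
    show ?case
    proof (intro allI impI)
      fix h :: "real^'m" assume "\<forall>\<beta>. \<beta> \<notin> {} \<longrightarrow> h $ \<beta> = 0"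
      then have "h = 0" by (simp add: vec_eq_iff)
      then show "\<bar>f (q + h) - f q - (\<Sum>\<beta>\<in>{}. h $ \<beta> * D \<beta> q)\<bar> \<le> e' * (\<Sum>\<beta>\<in>{}. \<bar>h $ \<beta>\<bar>)" by simp
    qed
  next
    case (2 b F)
    show ?case
    proof (intro allI impI)
      fix h :: "real^'m" assume hs: "\<forall>\<beta>. \<beta> \<notin> insert b F \<longrightarrow> h $ \<beta> = 0" and hn: "norm h < d"
      define h' where "h' = h - (h $ b) *\<^sub>R axis b 1"
      have h'c: "h' $ \<beta> = (if \<beta> = b then 0 else h $ \<beta>)" for \<beta>
        by (simp add: h'_def axis_def)
      have h's: "\<forall>\<beta>. \<beta> \<notin> F \<longrightarrow> h' $ \<beta> = 0" using hs h'c by auto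
      have dom: "norm (h' + t *\<^sub>R axis b 1) \<le> norm h" if "\<bar>t\<bar> \<le> \<bar>h $ b\<bar>" for t
        by (rule norm_le_componentwise_cart) (use that in \<open>auto simp: h'c axis_def\<close>)
      have h'n: "norm h' < d" using dom[of 0] hn by simp
      have IH: "\<bar>f (q + h') - f q - (\<Sum>\<beta>\<in>F. h' $ \<beta> * D \<beta> q)\<bar> \<le> e' * (\<Sum>\<beta>\<in>F. \<bar>h' $ \<beta>\<bar>)"
        using 2(3) h's h'n by blast
      have sF1: "(\<Sum>\<beta>\<in>F. h' $ \<beta> * D \<beta> q) = (\<Sum>\<beta>\<in>F. h $ \<beta> * D \<beta> q)"
        using 2(2) h'c by (intro sum.cong) auto
      have sF2: "(\<Sum>\<beta>\<in>F. \<bar>h' $ \<beta>\<bar>) = (\<Sum>\<beta>\<in>F. \<bar>h $ \<beta>\<bar>)"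
        using 2(2) h'c by (intro sum.cong) auto
      have qh: "f ((q + h') + (h $ b) *\<^sub>R axis b 1) = f (q + h)" by (simp add: h'_def)
      have L: "\<bar>f ((q + h') + (h $ b) *\<^sub>R axis b 1) - f (q + h') - h $ b * D b q\<bar> \<le> e' * \<bar>h $ b\<bar>"
      proof (rule line_bound[where D = "\<lambda>t. D b (q + h' + t *\<^sub>R axis b 1)"])
        fix t assume t: "\<bar>t\<bar> \<le> \<bar>h $ b\<bar>"
        have n: "norm (h' + t *\<^sub>R axis b 1) < d" using dom[OF t] hn by simp
        show "((\<lambda>u. f (q + h' + t *\<^sub>R axis b 1 + u *\<^sub>R axis b 1)) has_real_derivative D b (q + h' + t *\<^sub>R axis b 1)) (at 0)"
          using D[OF inU[OF n]] by (simp add: add.assoc)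
        show "\<bar>D b (q + h' + t *\<^sub>R axis b 1) - D b q\<bar> \<le> e'"
          using Dclose[OF n] by (simp add: add.assoc)
      qed
      have "\<bar>f (q + h) - f q - (\<Sum>\<beta>\<in>insert b F. h $ \<beta> * D \<beta> q)\<bar>
          = \<bar>(f ((q + h') + (h $ b) *\<^sub>R axis b 1) - f (q + h') - h $ b * D b q)
             + (f (q + h') - f q - (\<Sum>\<beta>\<in>F. h' $ \<beta> * D \<beta> q))\<bar>"
        unfolding qh using 2(1,2) sF1 by (simp add: algebra_simps)
      also have "\<dots> \<le> e' * \<bar>h $ b\<bar> + e' * (\<Sum>\<beta>\<in>F. \<bar>h' $ \<beta>\<bar>)"
        using L IH by linarith
      also have "\<dots> = e' * (\<Sum>\<beta>\<in>insert b F. \<bar>h $ \<beta>\<bar>)"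
        using 2(1,2) sF2 by (simp add: distrib_left)
      finally show "\<bar>f (q + h) - f q - (\<Sum>\<beta>\<in>insert b F. h $ \<beta> * D \<beta> q)\<bar> \<le> e' * (\<Sum>\<beta>\<in>insert b F. \<bar>h $ \<beta>\<bar>)" .
    qed
  qed
  show "\<exists>d>0. \<forall>y. norm (y - q) < d \<longrightarrow>
      norm (f y - f q - (\<Sum>\<beta>\<in>UNIV. (y - q) $ \<beta> * D \<beta> q)) \<le> e * norm (y - q)"
  proof (intro exI[of _ d] conjI allI impI)
    show "d > 0" by (rule d)
    fix y assume y: "norm (y - q) < d"
    define h where "h = y - q"
    have "\<bar>f (q + h) - f q - (\<Sum>\<beta>\<in>UNIV. h $ \<beta> * D \<beta> q)\<bar> \<le> e' * (\<Sum>\<beta>\<in>UNIV. \<bar>h $ \<beta>\<bar>)"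
      using main[of UNIV, rule_format, of h] y unfolding h_def by simp
    also have "(\<Sum>\<beta>\<in>UNIV. \<bar>h $ \<beta>\<bar>) \<le> (\<Sum>\<beta>\<in>(UNIV::'m set). norm h)"
      by (intro sum_mono component_le_norm_cart)
    also have "\<dots> = K * norm h" by (simp add: K_def)
    finally have "\<bar>f (q + h) - f q - (\<Sum>\<beta>\<in>UNIV. h $ \<beta> * D \<beta> q)\<bar> \<le> e' * (K * norm h)"
      using e' by (simp add: mult_left_mono)
    also have "e' * (K * norm h) = e * norm h" using K by (simp add: e'_def)
    finally show "norm (f y - f q - (\<Sum>\<beta>\<in>UNIV. (y - q) $ \<beta> * D \<beta> q)) \<le> e * norm (y - q)"
      by (simp add: h_def)
  qed
qed

lemma curve_has_derivative:
  fixes c :: "real \<Rightarrow> real^'m::finite"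
  assumes "\<And>i. ((\<lambda>t. c t $ i) has_real_derivative c' $ i) (at \<tau>)"
  shows "(c has_derivative (\<lambda>h. h *\<^sub>R c')) (at \<tau>)"
proof -
  have "\<forall>i\<in>Basis. ((\<lambda>x. c x \<bullet> i) has_derivative (\<lambda>x. (x *\<^sub>R c') \<bullet> i)) (at \<tau>)"
  proof
    fix i :: "real^'m" assume "i \<in> Basis"
    then obtain j where j: "i = axis j 1" by (auto simp: Basis_vec_def)
    show "((\<lambda>x. c x \<bullet> i) has_derivative (\<lambda>x. (x *\<^sub>R c') \<bullet> i)) (at \<tau>)"
    proof -
      have e: "(\<lambda>x. x * c' $ j) = (*) (c' $ j)" by (auto simp: mult.commute)
      show ?thesis using assms[of j] unfolding j has_field_derivative_def
        by (simp add: inner_axis e)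
    qed
  qed
  then show ?thesis using has_derivative_componentwise_within[of c _ \<tau> UNIV] by simp
qed

lemma smooth_pd:
  assumes "smooth_on U f" "q \<in> U"
  shows "((\<lambda>t. f (q + t *\<^sub>R axis \<beta> 1)) has_real_derivative pd \<beta> f q) (at 0)"
proof -
  have "((\<lambda>t. iterpd [] f (q + t *\<^sub>R axis \<beta> 1)) has_real_derivative iterpd ([] @ [\<beta>]) f q) (at 0)"
    using assms unfolding smooth_on_def by blast
  then show ?thesis by (simp add: iterpd_def)
qed

lemma smooth_pd_cont:
  assumes "smooth_on U f"
  shows "continuous_on U (pd \<beta> f)"
proof -
  have "continuous_on U (iterpd [\<beta>] f)" using assms unfolding smooth_on_def by blast
  then show ?thesis by (simp add: iterpd_def)
qed

lemma smooth_chain: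
  fixes f :: "real^'m::finite \<Rightarrow> real"
  assumes "open U" "smooth_on U f" "c \<tau> \<in> U"
    "\<And>i. ((\<lambda>t. c t $ i) has_real_derivative c' $ i) (at \<tau>)"
  shows "((\<lambda>t. f (c t)) has_real_derivative (\<Sum>\<mu>\<in>UNIV. pd \<mu> f (c \<tau>) * c' $ \<mu>)) (at \<tau>)"
proof -
  have F: "(f has_derivative (\<lambda>h. \<Sum>\<beta>\<in>UNIV. h $ \<beta> * pd \<beta> f (c \<tau>))) (at (c \<tau>))"
    by (rule partials_has_derivative[OF assms(1,3)])
      (use smooth_pd[OF assms(2)] smooth_pd_cont[OF assms(2)] in auto)
  have 1: "((\<lambda>t. f (c t)) has_derivative ((\<lambda>h. \<Sum>\<beta>\<in>UNIV. h $ \<beta> * pd \<beta> f (c \<tau>)) \<circ> (\<lambda>h. h *\<^sub>R c'))) (at \<tau>)"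
    using diff_chain_at[OF curve_has_derivative[OF assms(4)] F] by (simp add: o_def)
  have 2: "((\<lambda>h. \<Sum>\<beta>\<in>UNIV. h $ \<beta> * pd \<beta> f (c \<tau>)) \<circ> (\<lambda>h. h *\<^sub>R c')) = (*) (\<Sum>\<mu>\<in>UNIV. pd \<mu> f (c \<tau>) * c' $ \<mu>)"
    by (auto simp: sum_distrib_right intro!: sum.cong ext)
  show ?thesis using 1 unfolding 2 has_field_derivative_def .
qed



fun dvmon :: "real^'m::finite \<Rightarrow> real^'m \<Rightarrow> 'm list \<Rightarrow> real" where
  "dvmon w w' [] = 0"
| "dvmon w w' (a # as) = w' $ a * vmon w as + w $ a * dvmon w w' as"

lemma vmon_Nil[simp]: "vmon w [] = 1" by (simp add: vmon_def)
lemma vmon_Cons[simp]: "vmon w (a # as) = w $ a * vmon w as" by (simp add: vmon_def)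

lemma vmon_deriv:
  fixes c :: "real \<Rightarrow> real^'m::finite"
  assumes "\<And>i. ((\<lambda>t. c t $ i) has_real_derivative c' $ i) (at \<tau>)"
  shows "((\<lambda>t. vmon (c t) as) has_real_derivative dvmon (c \<tau>) c' as) (at \<tau>)"
proof (induction as)
  case Nil then show ?case by simp
next
  case (Cons a as)
  show ?case using DERIV_mult[OF assms[of a] Cons] by (simp add: algebra_simps)
qed

lemma finite_idx[simp]: "finite (idx n :: 'm::finite list set)"
proof -
  have "idx n = {xs :: 'm list. set xs \<subseteq> UNIV \<and> length xs = n}" by (simp add: idx_def)
  then show ?thesis using finite_lists_length_eq[of "UNIV :: 'm set" n] by simp
qed

lemma idx_0: "idx 0 = {[]}" by (auto simp: idx_def)

lemma idx_Suc: "idx (Suc n) = (\<lambda>(a, bs). a # bs) ` (UNIV \<times> idx n)"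
proof
  show "idx (Suc n) \<subseteq> (\<lambda>(a, bs). a # bs) ` (UNIV \<times> idx n)"
  proof
    fix xs assume "xs \<in> idx (Suc n)"
    then obtain a bs where "xs = a # bs" "length bs = n" by (cases xs) (auto simp: idx_def)
    then show "xs \<in> (\<lambda>(a, bs). a # bs) ` (UNIV \<times> idx n)" by (auto simp: idx_def)
  qed
qed (auto simp: idx_def)

lemma sum_idx_Suc:
  "(\<Sum>\<alpha>s\<in>idx (Suc n). g \<alpha>s) = (\<Sum>a\<in>(UNIV::'m::finite set). \<Sum>\<alpha>s\<in>idx n. g (a # \<alpha>s))"
proof -
  have inj: "inj_on (\<lambda>(a, bs). a # bs) (UNIV \<times> (idx n :: 'm list set))"
    by (auto simp: inj_on_def)
  have "(\<Sum>\<alpha>s\<in>idx (Suc n). g \<alpha>s) = (\<Sum>p\<in>UNIV \<times> idx n. g (fst p # snd p))"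
    unfolding idx_Suc by (subst sum.reindex[OF inj]) (auto simp: case_prod_beta intro!: sum.cong)
  also have "\<dots> = (\<Sum>a\<in>UNIV. \<Sum>\<alpha>s\<in>idx n. g (a # \<alpha>s))"
    by (simp add: sum.cartesian_product case_prod_beta)
  finally show ?thesis .
qed

definition symc :: "nat \<Rightarrow> ('m list \<Rightarrow> real) \<Rightarrow> bool" where
  "symc k c \<longleftrightarrow> (\<forall>\<alpha>s \<gamma>s. length \<alpha>s = k \<longrightarrow> mset \<alpha>s = mset \<gamma>s \<longrightarrow> c \<alpha>s = c \<gamma>s)"

lemma sym_identity:
  fixes c :: "'m::finite list \<Rightarrow> real"
  assumes "symc (Suc n) c"
  shows "(\<Sum>\<alpha>s\<in>idx (Suc n). c \<alpha>s * dvmon w w' \<alpha>s)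
       = real (Suc n) * (\<Sum>\<mu>\<in>UNIV. \<Sum>\<alpha>s\<in>idx n. c (\<mu> # \<alpha>s) * w' $ \<mu> * vmon w \<alpha>s)"
  using assms
proof (induction n arbitrary: c)
  case 0
  show ?case by (simp add: sum_idx_Suc idx_0)
next
  case (Suc m)
  have symA: "symc (Suc m) (\<lambda>\<beta>s. c (a # \<beta>s))" for a
    using Suc.prems unfolding symc_def by auto
  have swap: "c (a # \<mu> # \<gamma>s) = c (\<mu> # a # \<gamma>s)" if "\<gamma>s \<in> idx m" for a \<mu> \<gamma>s
  proof -
    have "mset (a # \<mu> # \<gamma>s) = mset (\<mu> # a # \<gamma>s)" by (simp add: add_mset_commute)
    moreover have "length (a # \<mu> # \<gamma>s) = Suc (Suc m)" using that by (simp add: idx_def)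
    ultimately show ?thesis using Suc.prems[unfolded symc_def, rule_format, of "a # \<mu> # \<gamma>s" "\<mu> # a # \<gamma>s"] by simp
  qed
  define X where "X = (\<Sum>\<mu>\<in>UNIV. \<Sum>\<beta>s\<in>idx (Suc m). c (\<mu> # \<beta>s) * w' $ \<mu> * vmon w \<beta>s)"
  have "(\<Sum>\<alpha>s\<in>idx (Suc (Suc m)). c \<alpha>s * dvmon w w' \<alpha>s)
      = (\<Sum>a\<in>UNIV. \<Sum>\<beta>s\<in>idx (Suc m). c (a # \<beta>s) * (w' $ a * vmon w \<beta>s + w $ a * dvmon w w' \<beta>s))"
    by (simp add: sum_idx_Suc[where n="Suc m"])
  also have "\<dots> = X + (\<Sum>a\<in>UNIV. w $ a * (\<Sum>\<beta>s\<in>idx (Suc m). c (a # \<beta>s) * dvmon w w' \<beta>s))"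
    unfolding X_def by (simp add: distrib_left sum.distrib sum_distrib_left mult_ac)
  also have "(\<Sum>a\<in>UNIV. w $ a * (\<Sum>\<beta>s\<in>idx (Suc m). c (a # \<beta>s) * dvmon w w' \<beta>s))
      = (\<Sum>a\<in>UNIV. w $ a * (real (Suc m) * (\<Sum>\<mu>\<in>UNIV. \<Sum>\<gamma>s\<in>idx m. c (a # \<mu> # \<gamma>s) * w' $ \<mu> * vmon w \<gamma>s)))"
    using Suc.IH[OF symA] by simp
  also have "\<dots> = real (Suc m) * (\<Sum>\<mu>\<in>UNIV. \<Sum>a\<in>UNIV. \<Sum>\<gamma>s\<in>idx m. c (\<mu> # a # \<gamma>s) * w' $ \<mu> * vmon w (a # \<gamma>s))"
  proof -
    have "(\<Sum>a\<in>UNIV. w $ a * (real (Suc m) * (\<Sum>\<mu>\<in>UNIV. \<Sum>\<gamma>s\<in>idx m. c (a # \<mu> # \<gamma>s) * w' $ \<mu> * vmon w \<gamma>s)))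
       = real (Suc m) * (\<Sum>a\<in>UNIV. \<Sum>\<mu>\<in>UNIV. \<Sum>\<gamma>s\<in>idx m. c (\<mu> # a # \<gamma>s) * w' $ \<mu> * vmon w (a # \<gamma>s))"
      by (simp add: sum_distrib_left swap mult_ac)
    also have "\<dots> = real (Suc m) * (\<Sum>\<mu>\<in>UNIV. \<Sum>a\<in>UNIV. \<Sum>\<gamma>s\<in>idx m. c (\<mu> # a # \<gamma>s) * w' $ \<mu> * vmon w (a # \<gamma>s))"
      by (subst sum.swap) simp
    finally show ?thesis .
  qed
  also have "\<dots> = real (Suc m) * X"
    unfolding X_def by (simp add: sum_idx_Suc[where n=m])
  finally show ?case unfolding X_def by (simp add: algebra_simps)
qed



lemma sum_axis: "(\<Sum>\<mu>\<in>UNIV. F \<mu> * (axis l 1 :: real^'m::finite) $ \<mu>) = F l"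
proof -
  have "(\<Sum>\<mu>\<in>UNIV. F \<mu> * (axis l 1 :: real^'m::finite) $ \<mu>) = (\<Sum>\<mu>\<in>UNIV. if \<mu> = l then F \<mu> else 0)"
    by (intro sum.cong) (auto simp: axis_def)
  then show ?thesis by simp
qed

lemma term1:
  assumes "open U" "\<forall>\<alpha>s. smooth_on U (G \<alpha>s)" "\<forall>\<mu>. smooth_on U (A \<mu>)" "q \<in> U"
    "Gform G N q v = 1" "N \<ge> 1"
  shows "pd l (\<lambda>q. Lag G A N q v) q =
     1 / real (2*N) * (\<Sum>\<alpha>s\<in>idx (2*N). pd l (G \<alpha>s) q * vmon v \<alpha>s) + (\<Sum>\<mu>\<in>UNIV. v $ \<mu> * pd l (A \<mu>) q)"
proof -
  have dG: "((\<lambda>t. Gform G N (q + t *\<^sub>R axis l 1) v) has_real_derivative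
      (\<Sum>\<alpha>s\<in>idx (2*N). pd l (G \<alpha>s) q * vmon v \<alpha>s)) (at 0)"
    unfolding Gform_def
    by (intro DERIV_sum DERIV_cmult_right smooth_pd[OF _ assms(4)]) (use assms(2) in auto)
  have dP: "((\<lambda>t. Gform G N (q + t *\<^sub>R axis l 1) v powr (1 / real (2*N))) has_real_derivative
      1 / real (2*N) * (\<Sum>\<alpha>s\<in>idx (2*N). pd l (G \<alpha>s) q * vmon v \<alpha>s)) (at 0)"
    using DERIV_fun_powr[OF dG, of "1 / real (2*N)"] assms(5) by simp
  have dA: "((\<lambda>t. \<Sum>\<mu>\<in>UNIV. v $ \<mu> * A \<mu> (q + t *\<^sub>R axis l 1)) has_real_derivative
      (\<Sum>\<mu>\<in>UNIV. v $ \<mu> * pd l (A \<mu>) q)) (at 0)"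
    by (intro DERIV_sum DERIV_cmult smooth_pd[OF _ assms(4)]) (use assms(3) in auto)
  have "((\<lambda>t. Lag G A N (q + t *\<^sub>R axis l 1) v) has_real_derivative
     1 / real (2*N) * (\<Sum>\<alpha>s\<in>idx (2*N). pd l (G \<alpha>s) q * vmon v \<alpha>s) + (\<Sum>\<mu>\<in>UNIV. v $ \<mu> * pd l (A \<mu>) q)) (at 0)"
    unfolding Lag_def by (rule DERIV_add[OF dP dA])
  then show ?thesis unfolding pd_def by (rule DERIV_imp_deriv)
qed

lemma symc_G:
  assumes "symmetric_tensor k G"
  shows "symc k (\<lambda>\<alpha>s. G \<alpha>s p)"
  using assms unfolding symmetric_tensor_def symc_def by simp

lemma symc_G_Cons:
  assumes "symmetric_tensor (Suc k) G"
  shows "symc k (\<lambda>\<alpha>s. G (l # \<alpha>s) p)"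
proof -
  { fix \<alpha>s \<gamma>s :: "'a list" assume "length \<alpha>s = k" "mset \<alpha>s = mset \<gamma>s"
    then have "G (l # \<alpha>s) = G (l # \<gamma>s)" using assms unfolding symmetric_tensor_def
      by (metis length_Cons mset.simps(2)) }
  then show ?thesis unfolding symc_def by simp
qed

lemma term2:
  assumes "symmetric_tensor (2*N) G" "Gform G N p w = 1" "N \<ge> 1"
  shows "pd l (\<lambda>w. Lag G A N p w) w =
     (\<Sum>\<alpha>s\<in>idx (2*N - 1). G (l # \<alpha>s) p * vmon w \<alpha>s) + A l p"
proof -
  define K where "K = 2*N - 1"
  have K: "2*N = Suc K" using assms(3) unfolding K_def by simp
  define e :: "real^'a" where "e = axis l 1"
  have dw: "((\<lambda>u. (w + u *\<^sub>R e) $ i) has_real_derivative e $ i) (at 0)" for i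
    by (auto intro!: derivative_eq_intros)
  have dG: "((\<lambda>u. Gform G N p (w + u *\<^sub>R e)) has_real_derivative
      (\<Sum>\<alpha>s\<in>idx (2*N). G \<alpha>s p * dvmon w e \<alpha>s)) (at 0)"
    unfolding Gform_def
    by (intro DERIV_sum DERIV_cmult) (use vmon_deriv[of "\<lambda>u. w + u *\<^sub>R e" e 0, OF dw] in simp)
  have "(\<Sum>\<alpha>s\<in>idx (2*N). G \<alpha>s p * dvmon w e \<alpha>s)
     = real (Suc K) * (\<Sum>\<mu>\<in>UNIV. \<Sum>\<alpha>s\<in>idx K. G (\<mu> # \<alpha>s) p * e $ \<mu> * vmon w \<alpha>s)"
    unfolding K by (rule sym_identity[OF symc_G]) (use assms(1) K in simp)
  also have "\<dots> = real (2*N) * (\<Sum>\<alpha>s\<in>idx (2*N - 1). G (l # \<alpha>s) p * vmon w \<alpha>s)"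
  proof -
    have "(\<Sum>\<mu>\<in>UNIV. \<Sum>\<alpha>s\<in>idx K. G (\<mu> # \<alpha>s) p * e $ \<mu> * vmon w \<alpha>s)
        = (\<Sum>\<mu>\<in>UNIV. (\<Sum>\<alpha>s\<in>idx K. G (\<mu> # \<alpha>s) p * vmon w \<alpha>s) * e $ \<mu>)"
      by (simp add: sum_distrib_right sum_distrib_left mult_ac)
    also have "\<dots> = (\<Sum>\<alpha>s\<in>idx K. G (l # \<alpha>s) p * vmon w \<alpha>s)"
      unfolding e_def by (rule sum_axis)
    finally show ?thesis using K by (metis diff_Suc_1 of_nat_Suc)
  qed
  finally have dG': "((\<lambda>u. Gform G N p (w + u *\<^sub>R e)) has_real_derivative
      real (2*N) * (\<Sum>\<alpha>s\<in>idx (2*N - 1). G (l # \<alpha>s) p * vmon w \<alpha>s)) (at 0)"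
    using dG by simp
  have dP: "((\<lambda>u. Gform G N p (w + u *\<^sub>R e) powr (1 / real (2*N))) has_real_derivative
      (\<Sum>\<alpha>s\<in>idx (2*N - 1). G (l # \<alpha>s) p * vmon w \<alpha>s)) (at 0)"
    using DERIV_fun_powr[OF dG', of "1 / real (2*N)"] assms(2,3) by simp
  have dA: "((\<lambda>u. \<Sum>\<mu>\<in>UNIV. (w + u *\<^sub>R e) $ \<mu> * A \<mu> p) has_real_derivative A l p) (at 0)"
  proof -
    have "((\<lambda>u. \<Sum>\<mu>\<in>UNIV. (w + u *\<^sub>R e) $ \<mu> * A \<mu> p) has_real_derivative (\<Sum>\<mu>\<in>UNIV. A \<mu> p * e $ \<mu>)) (at 0)"
      by (intro DERIV_sum) (auto intro!: derivative_eq_intros)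
    then show ?thesis unfolding e_def sum_axis .
  qed
  have "((\<lambda>u. Lag G A N p (w + u *\<^sub>R e)) has_real_derivative
     (\<Sum>\<alpha>s\<in>idx (2*N - 1). G (l # \<alpha>s) p * vmon w \<alpha>s) + A l p) (at 0)"
    unfolding Lag_def by (rule DERIV_add[OF dP dA])
  then show ?thesis unfolding pd_def e_def by (rule DERIV_imp_deriv)
qed

theorem lemma5p4:
  fixes U :: "(real^'m::finite) set" and T :: "real set"
    and G :: "'m list \<Rightarrow> real^'m \<Rightarrow> real" and A :: "'m \<Rightarrow> real^'m \<Rightarrow> real"
    and N :: nat and s :: "real \<Rightarrow> real^'m"
  assumes "N \<ge> 1"
    and "open U"
    and "\<forall>\<alpha>s. smooth_on U (G \<alpha>s)"
    and "symmetric_tensor (2*N) G"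
    and "\<forall>q\<in>U. \<forall>v. v \<noteq> 0 \<longrightarrow> Gform G N q v > 0"
    and "\<forall>\<mu>. smooth_on U (A \<mu>)"
    and "open T"
    and "smooth_curve T s"
    and "s ` T \<subseteq> U"
    and "\<forall>\<tau>\<in>T. vel s \<tau> \<noteq> 0"
    and "\<forall>\<tau>\<in>T. \<forall>l. EL G A N s l \<tau> = 0"
    and "\<forall>\<tau>\<in>T. Gform G N (s \<tau>) (vel s \<tau>) = 1"
  shows "\<forall>\<tau>\<in>T. \<forall>\<beta>. Eexpr G A N \<beta> (s \<tau>) (vel s \<tau>) (acc s \<tau>) = 0"
proof (intro ballI allI)
  fix \<tau> l assume \<tau>: "\<tau> \<in> T"
  define q where "q = s \<tau>"
  define v where "v = vel s \<tau>"
  define a where "a = acc s \<tau>"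
  define K' where "K' = 2*N - 2"
  have K1: "2*N = Suc (Suc K')" "2*N - 1 = Suc K'" using assms(1) unfolding K'_def by auto
  have qU: "q \<in> U" using assms(9) \<tau> unfolding q_def by auto
  have Gq: "Gform G N q v = 1" using assms(12) \<tau> unfolding q_def v_def by auto
  have ds: "((\<lambda>t. s t $ i) has_real_derivative vel s t $ i) (at t)" if "t \<in> T" for i t
  proof -
    have "(((deriv ^^ 0) (\<lambda>t. s t $ i)) has_real_derivative (deriv ^^ Suc 0) (\<lambda>t. s t $ i) t) (at t)"
      using assms(8) that unfolding smooth_curve_def by blast
    then show ?thesis by (simp add: vel_def)
  qed
  have dv: "((\<lambda>t. vel s t $ i) has_real_derivative a $ i) (at \<tau>)" for i
  proof -
    have e: "(\<lambda>t. vel s t $ i) = (deriv ^^ 1) (\<lambda>t. s t $ i)" by (simp add: vel_def fun_eq_iff)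
    have "(((deriv ^^ 1) (\<lambda>t. s t $ i)) has_real_derivative (deriv ^^ Suc 1) (\<lambda>t. s t $ i) \<tau>) (at \<tau>)"
      using assms(8) \<tau> unfolding smooth_curve_def by blast
    then show ?thesis unfolding e a_def acc_def by (simp add: numeral_2_eq_2)
  qed
  define P where "P t = (\<Sum>\<alpha>s\<in>idx (2*N - 1). G (l # \<alpha>s) (s t) * vmon (vel s t) \<alpha>s)" for t
  have T2: "pd l (\<lambda>w. Lag G A N (s t) w) (vel s t) = P t + A l (s t)" if "t \<in> T" for t
    unfolding P_def by (rule term2[OF assms(4) _ assms(1)]) (use assms(12) that in auto)
  define P' where "P' = (\<Sum>\<alpha>s\<in>idx (2*N - 1). (\<Sum>\<mu>\<in>UNIV. pd \<mu> (G (l # \<alpha>s)) q * v $ \<mu>) * vmon v \<alpha>s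
      + G (l # \<alpha>s) q * dvmon v a \<alpha>s)"
  have dP: "(P has_real_derivative P') (at \<tau>)"
    unfolding P_def P'_def
  proof (rule DERIV_sum)
    fix \<alpha>s
    have 1: "((\<lambda>t. G (l # \<alpha>s) (s t)) has_real_derivative (\<Sum>\<mu>\<in>UNIV. pd \<mu> (G (l # \<alpha>s)) q * v $ \<mu>)) (at \<tau>)"
      unfolding q_def v_def
      by (rule smooth_chain[OF assms(2)]) (use assms(3) qU ds[OF \<tau>] in \<open>auto simp: q_def\<close>)
    have 2: "((\<lambda>t. vmon (vel s t) \<alpha>s) has_real_derivative dvmon v a \<alpha>s) (at \<tau>)"
      unfolding v_def by (rule vmon_deriv) (rule dv)
    show "((\<lambda>t. G (l # \<alpha>s) (s t) * vmon (vel s t) \<alpha>s) has_real_derivative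
        (\<Sum>\<mu>\<in>UNIV. pd \<mu> (G (l # \<alpha>s)) q * v $ \<mu>) * vmon v \<alpha>s + G (l # \<alpha>s) q * dvmon v a \<alpha>s) (at \<tau>)"
      using DERIV_mult[OF 1 2] by (simp add: q_def v_def mult.commute)
  qed
  have dA: "((\<lambda>t. A l (s t)) has_real_derivative (\<Sum>\<mu>\<in>UNIV. pd \<mu> (A l) q * v $ \<mu>)) (at \<tau>)"
    unfolding q_def v_def
    by (rule smooth_chain[OF assms(2)]) (use assms(6) qU ds[OF \<tau>] in \<open>auto simp: q_def\<close>)
  have dT2: "((\<lambda>t. pd l (\<lambda>w. Lag G A N (s t) w) (vel s t)) has_real_derivative
      P' + (\<Sum>\<mu>\<in>UNIV. pd \<mu> (A l) q * v $ \<mu>)) (at \<tau>)"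
    by (rule has_field_derivative_transform_within_open[OF DERIV_add[OF dP dA] assms(7) \<tau>])
      (simp add: T2)
  have EL0: "EL G A N s l \<tau> = 0" using assms(11) \<tau> by auto
  have T1: "pd l (\<lambda>q. Lag G A N q v) q =
     1 / real (2*N) * (\<Sum>\<alpha>s\<in>idx (2*N). pd l (G \<alpha>s) q * vmon v \<alpha>s) + (\<Sum>\<mu>\<in>UNIV. v $ \<mu> * pd l (A \<mu>) q)"
    by (rule term1[OF assms(2,3,6) qU Gq assms(1)])
  have main: "1 / real (2*N) * (\<Sum>\<alpha>s\<in>idx (2*N). pd l (G \<alpha>s) q * vmon v \<alpha>s) + (\<Sum>\<mu>\<in>UNIV. v $ \<mu> * pd l (A \<mu>) q)
      - (P' + (\<Sum>\<mu>\<in>UNIV. pd \<mu> (A l) q * v $ \<mu>)) = 0"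
    using EL0 unfolding EL_def T1[unfolded q_def v_def] DERIV_imp_deriv[OF dT2]
    by (simp add: q_def v_def)
  define X where "X = (\<Sum>\<mu>\<in>UNIV. \<Sum>\<alpha>s\<in>idx (2*N - 1). pd l (G (\<mu> # \<alpha>s)) q * v $ \<mu> * vmon v \<alpha>s)"
  define Pa where "Pa = (\<Sum>\<mu>\<in>UNIV. \<Sum>\<alpha>s\<in>idx (2*N - 1). pd \<mu> (G (l # \<alpha>s)) q * v $ \<mu> * vmon v \<alpha>s)"
  define S2 where "S2 = (\<Sum>\<mu>\<in>UNIV. \<Sum>\<alpha>s\<in>idx (2*N - 2). G (l # \<mu> # \<alpha>s) q * a $ \<mu> * vmon v \<alpha>s)"
  define S3 where "S3 = (\<Sum>\<mu>\<in>UNIV. Fld A l \<mu> q * v $ \<mu>)"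
  have eX: "(\<Sum>\<alpha>s\<in>idx (2*N). pd l (G \<alpha>s) q * vmon v \<alpha>s) = X"
    unfolding X_def K1(1) K1(2) by (simp add: sum_idx_Suc[where n="Suc K'"] mult_ac)
  have eP: "P' = Pa + real (2*N - 1) * S2"
  proof -
    have a1: "(\<Sum>\<alpha>s\<in>idx (2*N - 1). (\<Sum>\<mu>\<in>UNIV. pd \<mu> (G (l # \<alpha>s)) q * v $ \<mu>) * vmon v \<alpha>s) = Pa"
      unfolding Pa_def by (subst sum.swap) (simp add: sum_distrib_right)
    have a2: "(\<Sum>\<alpha>s\<in>idx (2*N - 1). G (l # \<alpha>s) q * dvmon v a \<alpha>s) = real (2*N - 1) * S2"
    proof -
      have st: "symmetric_tensor (Suc (Suc K')) G" using assms(4) K1(1) by simp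
      have "(\<Sum>\<alpha>s\<in>idx (Suc K'). G (l # \<alpha>s) q * dvmon v a \<alpha>s)
          = real (Suc K') * (\<Sum>\<mu>\<in>UNIV. \<Sum>\<alpha>s\<in>idx K'. G (l # \<mu> # \<alpha>s) q * a $ \<mu> * vmon v \<alpha>s)"
        by (rule sym_identity[OF symc_G_Cons[OF st]])
      then show ?thesis unfolding S2_def K1(2) K'_def[symmetric] .
    qed
    show ?thesis unfolding P'_def sum.distrib a1 a2 ..
  qed
  have eS3: "(\<Sum>\<mu>\<in>UNIV. v $ \<mu> * pd l (A \<mu>) q) - (\<Sum>\<mu>\<in>UNIV. pd \<mu> (A l) q * v $ \<mu>) = S3"
    unfolding S3_def Fld_def by (simp add: sum_subtractf[symmetric] algebra_simps)
  have eS1: "(\<Sum>\<mu>\<in>UNIV. \<Sum>\<alpha>s\<in>idx (2*N - 1).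
        (1 / real (2*N) * pd l (G (\<mu> # \<alpha>s)) q - pd \<mu> (G (l # \<alpha>s)) q) * v $ \<mu> * vmon v \<alpha>s)
      = 1 / real (2*N) * X - Pa"
    unfolding X_def Pa_def
    by (simp add: sum_subtractf[symmetric] sum_distrib_left algebra_simps)
  have "Eexpr G A N l q v a = 1 / real (2*N) * X - Pa - real (2*N - 1) * S2 + S3"
    unfolding Eexpr_def eS1 Gq S2_def S3_def by simp
  also have "\<dots> = 0" using main[unfolded eX eP] eS3 by linarith
  finally show "Eexpr G A N l (s \<tau>) (vel s \<tau>) (acc s \<tau>) = 0" by (simp add: q_def v_def a_def)
qed

end
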